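(* Let $a\in(0,1)$, $\tau=\frac{1+a}{1-a}$, and define $\mu\in(0,1/3)$ by $\tau^{-1}=1-3\mu$. For each integer $n\ge1$ let $J_n=[(1-2\mu)n,(1-\mu)n]$ and write $(T_a(z))^n=\sum_{m\ge0}a_{m,n}z^m$. Then there exists $\delta=\delta_a>0$ such that for every sufficiently large $n$ there is a set $E$ of integers with $E\subseteq J_n$, $|E|\ge\delta n$, and $|a_{m,n}|\ge\delta n^{-1/2}$ for every $m\in E$.
   Context: $T_a(z)=\frac{a+z}{1+\bar a z}$, an automorphism of the unit disk; $|E|$ denotes the cardinality of $E$. *)

theory Defs
  imports "HOL-Analysis.Analysis"
begin

definition Ta :: "complex \<Rightarrow> complex \<Rightarrow> complex" where
  "Ta a z = (a + z) / (1 + cnj a * z)"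

definition acoef :: "complex \<Rightarrow> nat \<Rightarrow> nat \<Rightarrow> complex" where
  "acoef a m n = (deriv ^^ m) (\<lambda>z. (Ta a z) ^ n) 0 / of_nat (fact m)"

end

theory Submission
  imports Defs "HOL-Complex_Analysis.Complex_Analysis"
begin


lemma cis_integral:
  fixes j :: int
  shows "((\<lambda>t. cis (real_of_int j * t)) has_integral (if j = 0 then 2*pi else 0)) {0..2*pi}"
proof (cases "j = 0")
  case True
  then show ?thesis using has_integral_const_real[of "1::complex" 0 "2*pi"]
    by (simp add: scaleR_conv_of_real)
next
  case False
  define A where "A = \<i> * (of_int j :: complex)"
  have A0: "A \<noteq> 0" using False by (simp add: A_def)
  have e: "exp (t *\<^sub>R A) = cis (real_of_int j * t)" for t
    by (simp add: A_def cis_conv_exp scaleR_conv_of_real mult.commute mult.left_commute)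
  define F where "F = (\<lambda>t. exp (t *\<^sub>R A) * inverse A)"
  have d: "(F has_vector_derivative cis (real_of_int j * t)) (at t within {0..2*pi})" for t
  proof -
    have "(F has_vector_derivative (exp (t *\<^sub>R A) * A) * inverse A) (at t within {0..2*pi})"
      unfolding F_def
      by (intro has_vector_derivative_mult_left exp_scaleR_has_vector_derivative_right)
    then show ?thesis using A0 e by (simp add: field_simps)
  qed
  have "((\<lambda>t. cis (real_of_int j * t)) has_integral F (2*pi) - F 0) {0..2*pi}"
    by (rule fundamental_theorem_of_calculus) (use d in auto)
  moreover have "F (2*pi) = F 0"
  proof -
    have "cis (2 * pi * real_of_int j) = 1" by (rule cis_multiple_2pi) auto
    then have "exp ((2*pi) *\<^sub>R A) = 1" using e[of "2*pi"] by (simp add: mult.commute)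
    then show ?thesis unfolding F_def by simp
  qed
  ultimately show ?thesis using False by simp
qed


lemma series_integral:
  fixes c :: "nat \<Rightarrow> complex" and \<phi> :: "nat \<Rightarrow> real \<Rightarrow> complex"
  assumes sc: "summable (\<lambda>k. norm (c k))"
    and cont: "\<And>k. continuous_on {a..b} (\<phi> k)"
    and bd: "\<And>k t. t \<in> {a..b} \<Longrightarrow> norm (\<phi> k t) \<le> B"
  shows "(\<lambda>k. c k * integral {a..b} (\<phi> k)) sums integral {a..b} (\<lambda>t. \<Sum>k. c k * \<phi> k t)"
proof -
  have u: "uniform_limit {a..b} (\<lambda>n t. \<Sum>i<n. c i * \<phi> i t) (\<lambda>t. \<Sum>i. c i * \<phi> i t) sequentially"
  proof (rule Weierstrass_m_test)
    show "norm (c n * \<phi> n t) \<le> norm (c n) * B" if "t \<in> {a..b}" for n t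
      using bd[OF that, of n] by (simp add: norm_mult mult_left_mono)
    show "summable (\<lambda>n. norm (c n) * B)" using sc by (rule summable_mult2)
  qed
  have cp: "continuous_on {a..b} (\<lambda>t. \<Sum>i<n. c i * \<phi> i t)" for n
    by (intro continuous_intros cont)
  obtain I J where I: "\<And>n. ((\<lambda>t. \<Sum>i<n. c i * \<phi> i t) has_integral I n) {a..b}"
     and J: "((\<lambda>t. \<Sum>i. c i * \<phi> i t) has_integral J) {a..b}" and lim: "I \<longlonglongrightarrow> J"
    by (rule uniform_limit_integral[OF u cp]) auto
  have In: "I n = (\<Sum>i<n. c i * integral {a..b} (\<phi> i))" for n
  proof -
    have "((\<lambda>t. \<Sum>i<n. c i * \<phi> i t) has_integral (\<Sum>i<n. c i * integral {a..b} (\<phi> i))) {a..b}"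
      by (intro has_integral_sum has_integral_mult_right integrable_integral integrable_continuous_interval cont) auto
    then show ?thesis using I[of n] by (metis has_integral_unique)
  qed
  have "I = (\<lambda>n. \<Sum>i<n. c i * integral {a..b} (\<phi> i))" using In by (intro ext) simp
  then show ?thesis unfolding sums_def using lim J by (simp add: integral_unique)
qed


lemma cis_pow: "cis t ^ m = cis (real m * t)" by (simp add: Complex.DeMoivre)

lemma powser_abs1:
  fixes p :: "nat \<Rightarrow> complex"
  assumes R: "1 < R" and sp: "\<And>z. norm z < R \<Longrightarrow> (\<lambda>m. p m * z^m) sums P z"
  shows "summable (\<lambda>m. norm (p m))"
proof -
  define r where "r = (1 + R) / 2"
  have r1: "1 < r" "r < R" using R by (auto simp: r_def)
  then have nr: "norm (complex_of_real r) = r" by simp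
  have "norm (complex_of_real r) < R" using r1 nr by simp
  then have "summable (\<lambda>m. p m * (complex_of_real r)^m)" using sp sums_summable by blast
  moreover have "norm (1::complex) < norm (complex_of_real r)" using r1 nr by simp
  ultimately have "summable (\<lambda>m. norm (p m * 1^m))" by (rule powser_insidea)
  then show ?thesis by simp
qed

lemma powser_circle:
  fixes p :: "nat \<Rightarrow> complex"
  assumes R: "1 < R" and sp: "\<And>z. norm z < R \<Longrightarrow> (\<lambda>m. p m * z^m) sums P z"
  shows "\<And>t. P (cis t) = (\<Sum>m. p m * cis (real m * t))"
    and "continuous_on {0..2*pi} (\<lambda>t. P (cis t))"
    and "\<And>t. norm (P (cis t)) \<le> (\<Sum>m. norm (p m))"
proof -
  have sa: "summable (\<lambda>m. norm (p m))" by (rule powser_abs1[OF R sp])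
  have sm: "(\<lambda>m. p m * cis (real m * t)) sums P (cis t)" for t
    using sp[of "cis t"] R by (simp add: cis_pow)
  then show e: "P (cis t) = (\<Sum>m. p m * cis (real m * t))" for t by (simp add: sums_iff)
  have u: "uniform_limit {0..2*pi} (\<lambda>n t. \<Sum>i<n. p i * cis (real i * t)) (\<lambda>t. \<Sum>i. p i * cis (real i * t)) sequentially"
    by (rule Weierstrass_m_test[where M="\<lambda>i. norm (p i)"]) (auto simp: norm_mult sa)
  have "continuous_on {0..2*pi} (\<lambda>t. \<Sum>i. p i * cis (real i * t))"
    by (rule uniform_limit_theorem[OF _ u]) (auto intro!: continuous_intros always_eventually)
  then show "continuous_on {0..2*pi} (\<lambda>t. P (cis t))" using e by simp
  show "norm (P (cis t)) \<le> (\<Sum>m. norm (p m))" for t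
  proof -
    have "norm (\<Sum>m. p m * cis (real m * t)) \<le> (\<Sum>m. norm (p m * cis (real m * t)))"
      by (rule summable_norm) (use sa in \<open>simp add: norm_mult\<close>)
    then show ?thesis using e by (simp add: norm_mult)
  qed
qed

lemma parseval:
  fixes p q :: "nat \<Rightarrow> complex" and P Q :: "complex \<Rightarrow> complex"
  assumes R: "1 < R"
    and sp: "\<And>z. norm z < R \<Longrightarrow> (\<lambda>m. p m * z^m) sums P z"
    and sq: "\<And>z. norm z < R \<Longrightarrow> (\<lambda>m. q m * z^m) sums Q z"
  shows "(\<lambda>m. p m * cnj (q m)) sums (integral {0..2*pi} (\<lambda>t. P (cis t) * cnj (Q (cis t))) / (2*pi))"
proof -
  note P = powser_circle[OF R sp] and Q = powser_circle[OF R sq]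
  have sap: "summable (\<lambda>m. norm (p m))" by (rule powser_abs1[OF R sp])
  have saq: "summable (\<lambda>m. norm (q m))" by (rule powser_abs1[OF R sq])
  have inner: "integral {0..2*pi} (\<lambda>t. cis (real m * t) * cnj (Q (cis t))) = 2 * pi * cnj (q m)" for m
  proof -
    have ci: "integral {0..2*pi} (\<lambda>t. cis (real m * t) * cnj (cis (real k * t))) = (if k = m then 2*pi else 0)" for k
    proof -
      have "(\<lambda>t. cis (real m * t) * cnj (cis (real k * t))) = (\<lambda>t. cis (real_of_int (int m - int k) * t))"
        by (auto simp: cis_cnj cis_mult algebra_simps)
      then show ?thesis using cis_integral[of "int m - int k"] by (auto simp: integral_unique)
    qed
    have "(\<lambda>k. cnj (q k) * integral {0..2*pi} (\<lambda>t. cis (real m * t) * cnj (cis (real k * t))))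
           sums integral {0..2*pi} (\<lambda>t. \<Sum>k. cnj (q k) * (cis (real m * t) * cnj (cis (real k * t))))"
      by (rule series_integral[where B=1]) (auto intro!: continuous_intros simp: saq norm_mult)
    moreover have "(\<Sum>k. cnj (q k) * (cis (real m * t) * cnj (cis (real k * t)))) = cis (real m * t) * cnj (Q (cis t))" for t
    proof -
      have "(\<lambda>k. q k * cis (real k * t)) sums Q (cis t)"
        using sq[of "cis t"] R by (simp add: cis_pow)
      then have "(\<lambda>k. cnj (q k * cis (real k * t))) sums cnj (Q (cis t))" by (rule sums_cnj[THEN iffD2])
      then have "(\<lambda>k. cis (real m * t) * cnj (q k * cis (real k * t))) sums (cis (real m * t) * cnj (Q (cis t)))"
        by (rule sums_mult)
      then show ?thesis by (simp add: sums_iff mult_ac)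
    qed
    ultimately have "(\<lambda>k. cnj (q k) * (if k = m then 2*pi else 0)) sums integral {0..2*pi} (\<lambda>t. cis (real m * t) * cnj (Q (cis t)))"
      by (simp add: ci)
    moreover have "(\<lambda>k. cnj (q k) * (if k = m then 2*pi else 0)) sums (2 * pi * cnj (q m))"
    proof -
      have "(\<lambda>k. cnj (q k) * (if k = m then 2*pi else 0)) = (\<lambda>k. if k = m then 2 * pi * cnj (q m) else 0)"
        by auto
      then show ?thesis using sums_single[of m "\<lambda>_. 2 * pi * cnj (q m)"] by simp
    qed
    ultimately show ?thesis using sums_unique2 by blast
  qed
  have "(\<lambda>m. p m * integral {0..2*pi} (\<lambda>t. cis (real m * t) * cnj (Q (cis t))))
        sums integral {0..2*pi} (\<lambda>t. \<Sum>m. p m * (cis (real m * t) * cnj (Q (cis t))))"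
  proof (rule series_integral[where B="\<Sum>m. norm (q m)"])
    show "continuous_on {0..2*pi} (\<lambda>t. cis (real k * t) * cnj (Q (cis t)))" for k
      by (intro continuous_intros Q(2) continuous_on_cnj)
    show "norm (cis (real k * t) * cnj (Q (cis t))) \<le> (\<Sum>m. norm (q m))" for k t
      using Q(3)[of t] by (simp add: norm_mult)
  qed (rule sap)
  moreover have "(\<Sum>m. p m * (cis (real m * t) * cnj (Q (cis t)))) = P (cis t) * cnj (Q (cis t))" for t
  proof -
    have "(\<lambda>m. p m * cis (real m * t)) sums P (cis t)"
      using sp[of "cis t"] R by (simp add: cis_pow)
    then have "(\<lambda>m. p m * cis (real m * t) * cnj (Q (cis t))) sums (P (cis t) * cnj (Q (cis t)))"
      by (rule sums_mult2)
    then show ?thesis by (simp add: sums_iff mult_ac)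
  qed
  ultimately have "(\<lambda>m. p m * (2 * pi * cnj (q m))) sums integral {0..2*pi} (\<lambda>t. P (cis t) * cnj (Q (cis t)))"
    by (simp add: inner)
  then have "(\<lambda>m. p m * (2 * pi * cnj (q m)) / (2*pi)) sums (integral {0..2*pi} (\<lambda>t. P (cis t) * cnj (Q (cis t))) / (2*pi))"
    by (rule sums_divide)
  then show ?thesis by simp
qed


lemma Ta_real: "Ta (complex_of_real s) z = (of_real s + z) / (1 + of_real s * z)"
  by (simp add: Ta_def)

lemma den_nz:
  assumes "0 < s" "norm z < 1/s"
  shows "1 + complex_of_real s * z \<noteq> 0"
proof
  assume h: "1 + complex_of_real s * z = 0"
  have "norm (complex_of_real s * z) < 1" using assms by (simp add: norm_mult field_simps)
  moreover have "complex_of_real s * z = -1" using h by (simp add: algebra_simps eq_neg_iff_add_eq_0)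
  ultimately show False by simp
qed

lemma T_holo:
  assumes "0 < s"
  shows "(\<lambda>z. Ta (complex_of_real s) z ^ n) holomorphic_on ball 0 (1/s)"
  unfolding Ta_real using den_nz[OF assms]
  by (intro holomorphic_intros) auto

lemma T_series:
  assumes "0 < s" "norm z < 1/s"
  shows "(\<lambda>m. acoef (complex_of_real s) m n * z^m) sums (Ta (complex_of_real s) z ^ n)"
  using holomorphic_power_series[OF T_holo[OF assms(1)], of z] assms(2)
  by (simp add: acoef_def)

lemma T_deriv:
  assumes "0 < s" "norm z < 1/s"
  shows "deriv (\<lambda>z. Ta (complex_of_real s) z ^ n) z =
     of_nat n * Ta (complex_of_real s) z ^ (n - 1) * ((1 - of_real s ^ 2) / (1 + of_real s * z) ^ 2)"
proof -
  have nz: "1 + complex_of_real s * z \<noteq> 0" by (rule den_nz[OF assms])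
  have "((\<lambda>z. ((of_real s + z) / (1 + of_real s * z)) ^ n) has_field_derivative
     of_nat n * ((of_real s + z) / (1 + of_real s * z)) ^ (n - 1) * ((1 - of_real s ^ 2) / (1 + of_real s * z) ^ 2)) (at z)"
    using nz
    apply (auto intro!: derivative_eq_intros)
    apply (simp add: field_simps power2_eq_square)
    done
  then show ?thesis unfolding Ta_real by (rule DERIV_imp_deriv)
qed

lemma zT_series:
  assumes "0 < s" "norm z < 1/s"
  shows "(\<lambda>m. (of_nat m * acoef (complex_of_real s) m n) * z^m) sums (z * deriv (\<lambda>z. Ta (complex_of_real s) z ^ n) z)"
proof -
  let ?f = "\<lambda>z. Ta (complex_of_real s) z ^ n"
  have h: "deriv ?f holomorphic_on ball 0 (1/s)"
    by (rule holomorphic_deriv[OF T_holo[OF assms(1)]]) auto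
  have "(\<lambda>k. (deriv ^^ k) (deriv ?f) 0 / fact k * z^k) sums deriv ?f z"
    using holomorphic_power_series[OF h, of z] assms(2) by simp
  moreover have "(deriv ^^ k) (deriv ?f) 0 / fact k = of_nat (Suc k) * acoef (complex_of_real s) (Suc k) n" for k
  proof -
    have "(deriv ^^ k) (deriv ?f) = (deriv ^^ Suc k) ?f" by (simp only: funpow_Suc_right o_def)
    moreover have "(fact (Suc k) :: complex) = of_nat (Suc k) * fact k" by (simp only: fact_Suc of_nat_mult)
    moreover have "(fact k :: complex) \<noteq> 0" by simp
    ultimately show ?thesis unfolding acoef_def by (simp del: of_nat_Suc fact_Suc)
  qed
  ultimately have "(\<lambda>k. of_nat (Suc k) * acoef (complex_of_real s) (Suc k) n * z^k) sums deriv ?f z" by simp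
  then have "(\<lambda>k. z * (of_nat (Suc k) * acoef (complex_of_real s) (Suc k) n * z^k)) sums (z * deriv ?f z)"
    by (rule sums_mult)
  then have "(\<lambda>k. (of_nat (Suc k) * acoef (complex_of_real s) (Suc k) n) * z^(Suc k)) sums (z * deriv ?f z)"
    by (simp add: mult_ac)
  then show ?thesis
    using sums_Suc_iff[where f="\<lambda>m. (of_nat m * acoef (complex_of_real s) m n) * z^m" and s="z * deriv ?f z"]
    by (simp del: of_nat_Suc)
qed

lemma g_series:
  assumes "0 < s" "norm z < 1/s"
  shows "(\<lambda>m. (- complex_of_real s) ^ m * z^m) sums (1 / (1 + of_real s * z))"
proof -
  have "norm (- complex_of_real s * z) < 1" using assms by (simp add: norm_mult field_simps)
  then have "(\<lambda>m. (- complex_of_real s * z) ^ m) sums (1 / (1 - (- complex_of_real s * z)))"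
    by (rule geometric_sums)
  moreover have "(\<lambda>m. (- complex_of_real s * z) ^ m) = (\<lambda>m. (- complex_of_real s) ^ m * z^m)"
    by (rule ext) (simp only: power_mult_distrib)
  ultimately show ?thesis by simp
qed

lemma g2_series:
  assumes "0 < s"
  obtains c :: "nat \<Rightarrow> complex" where "c 0 = 1" "\<And>z. norm z < 1/s \<Longrightarrow> (\<lambda>m. c m * z^m) sums ((1 / (1 + of_real s * z)) ^ 2)"
proof -
  let ?h = "\<lambda>z::complex. (1 / (1 + of_real s * z)) ^ 2"
  have h: "?h holomorphic_on ball 0 (1/s)" using den_nz[OF assms]
    by (intro holomorphic_intros) auto
  show ?thesis
    by (rule that[of "\<lambda>m. (deriv ^^ m) ?h 0 / fact m"]) (use holomorphic_power_series[OF h] in auto)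
qed

lemma one_series: "(\<lambda>m. (if m = 0 then 1 else 0) * z^m) sums (1::complex)"
proof -
  have "(\<lambda>m. (if m = 0 then 1 else 0) * z^m) = (\<lambda>m. if m = 0 then (1::complex) else 0)" by auto
  then show ?thesis using sums_single[of 0 "\<lambda>_. 1::complex"] by simp
qed


lemma circ_zw:
  assumes "norm z = 1"
  shows "z * cnj z = 1"
  using assms complex_norm_square[of z] by simp

lemma circ_den:
  assumes "0 < s" "s < 1" "norm z = 1"
  shows "1 + complex_of_real s * z \<noteq> 0" "1 + complex_of_real s * cnj z \<noteq> 0"
  using den_nz[OF assms(1), of z] den_nz[OF assms(1), of "cnj z"] assms by auto

lemma alg1:
  fixes z w s :: complex
  assumes "z * w = 1" "1 + s * z \<noteq> 0" "1 + s * w \<noteq> 0"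
  shows "(s + z) / (1 + s * z) * ((s + w) / (1 + s * w)) = 1"
proof -
  have "(s + z) * (s + w) - (1 + s * z) * (1 + s * w) = (z * w - 1) * (1 - s * s)"
    by (simp add: algebra_simps)
  then have "(s + z) * (s + w) = (1 + s * z) * (1 + s * w)" using assms(1) by simp
  then show ?thesis using assms(2,3) by (simp add: divide_simps)
qed

lemma circ_T:
  assumes "0 < s" "s < 1" "norm z = 1"
  shows "Ta (complex_of_real s) z * cnj (Ta (complex_of_real s) z) = 1"
proof -
  have zw: "z * cnj z = 1" by (rule circ_zw[OF assms(3)])
  note d = circ_den[OF assms]
  have "cnj (Ta (complex_of_real s) z) = (of_real s + cnj z) / (1 + of_real s * cnj z)"
    by (simp add: Ta_real)
  then show ?thesis using alg1[OF zw d] unfolding Ta_real by simp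
qed

lemma alg2:
  fixes z w s :: complex
  assumes "z * w = 1" "1 + s * z \<noteq> 0" "1 + s * w \<noteq> 0"
  shows "z * ((1 - s ^ 2) / (1 + s * z) ^ 2) * ((s + w) / (1 + s * w))
       = (1 - s ^ 2) * ((1 / (1 + s * z)) * (1 / (1 + s * w)))"
proof -
  have e: "z * (s + w) = 1 + s * z" using assms(1) by (simp add: algebra_simps)
  have "z * ((1 - s ^ 2) / (1 + s * z) ^ 2) * ((s + w) / (1 + s * w))
      = (1 - s ^ 2) * (z * (s + w)) / ((1 + s * z) * (1 + s * z) * (1 + s * w))"
    by (simp add: power2_eq_square)
  also have "\<dots> = (1 - s ^ 2) * (1 + s * z) / ((1 + s * z) * (1 + s * z) * (1 + s * w))"
    by (simp only: e)
  also have "\<dots> = (1 - s ^ 2) * ((1 / (1 + s * z)) * (1 / (1 + s * w)))"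
    using assms(2,3) by (simp add: divide_simps)
  finally show ?thesis .
qed

lemma alg3:
  fixes z w s :: complex
  assumes "z * w = 1" "1 + s * z \<noteq> 0" "1 + s * w \<noteq> 0"
  shows "(1 - s ^ 2) * ((1 / (1 + s * z)) * (1 / (1 + s * w))) = 1 / (1 + s * z) + 1 / (1 + s * w) - 1"
proof -
  have "(1 + s * w) + (1 + s * z) - (1 + s * z) * (1 + s * w) = 1 - s^2 * (z * w)"
    by (simp add: algebra_simps power2_eq_square)
  then have e: "(1 + s * w) + (1 + s * z) - (1 + s * z) * (1 + s * w) = 1 - s^2" using assms(1) by simp
  have "1 / (1 + s * z) + 1 / (1 + s * w) - 1 = ((1 + s * w) + (1 + s * z) - (1 + s * z) * (1 + s * w)) / ((1 + s * z) * (1 + s * w))"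
    using assms(2,3) by (simp add: divide_simps)
  also have "\<dots> = (1 - s ^ 2) * ((1 / (1 + s * z)) * (1 / (1 + s * w)))" by (simp only: e) simp
  finally show ?thesis by simp
qed

lemma circ_Tn:
  assumes "0 < s" "s < 1" "norm z = 1"
  shows "Ta (complex_of_real s) z ^ n * cnj (Ta (complex_of_real s) z ^ n) = 1"
  using circ_T[OF assms] by (simp add: power_mult_distrib[symmetric])

lemma circ_zf:
  assumes "0 < s" "s < 1" "norm z = 1" "1 \<le> n"
  shows "z * deriv (\<lambda>z. Ta (complex_of_real s) z ^ n) z * cnj (Ta (complex_of_real s) z ^ n)
     = of_nat n * (1 - of_real s ^ 2) * ((1 / (1 + of_real s * z)) * cnj (1 / (1 + of_real s * z)))"
proof -
  let ?T = "Ta (complex_of_real s) z"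
  have zw: "z * cnj z = 1" by (rule circ_zw[OF assms(3)])
  note d = circ_den[OF assms(1-3)]
  have nz: "norm z < 1/s" using assms by (simp add: field_simps)
  have p: "?T ^ (n-1) * cnj ?T ^ (n-1) = 1" using circ_T[OF assms(1-3)] by (simp add: power_mult_distrib[symmetric])
  obtain k where k: "n = Suc k" using assms(4) by (cases n) auto
  have "cnj (?T ^ n) = cnj ?T ^ (n-1) * cnj ?T" unfolding k complex_cnj_power by (simp add: mult.commute)
  then have "z * deriv (\<lambda>z. Ta (complex_of_real s) z ^ n) z * cnj (?T ^ n)
      = of_nat n * (?T ^ (n-1) * cnj ?T ^ (n-1)) * (z * ((1 - of_real s ^ 2) / (1 + of_real s * z) ^ 2) * cnj ?T)"
    unfolding T_deriv[OF assms(1) nz] by (simp add: mult_ac)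
  also have "\<dots> = of_nat n * (z * ((1 - of_real s ^ 2) / (1 + of_real s * z) ^ 2) * cnj ?T)" using p by simp
  also have "z * ((1 - of_real s ^ 2) / (1 + of_real s * z) ^ 2) * cnj ?T
        = (1 - of_real s ^ 2) * ((1 / (1 + of_real s * z)) * cnj (1 / (1 + of_real s * z)))"
  proof -
    have "cnj ?T = (of_real s + cnj z) / (1 + of_real s * cnj z)" by (simp add: Ta_real)
    then show ?thesis using alg2[OF zw d] by simp
  qed
  finally show ?thesis by (simp add: mult_ac)
qed

lemma circ_g:
  assumes "0 < s" "s < 1" "norm z = 1"
  shows "(1 - of_real s ^ 2) * ((1 / (1 + of_real s * z)) * cnj (1 / (1 + of_real s * z)))
     = (1 / (1 + of_real s * z)) + cnj (1 / (1 + of_real s * z)) - 1"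
  using alg3[OF circ_zw[OF assms(3)] circ_den[OF assms]] by simp


lemma moments:
  assumes s: "0 < s" "s < 1" and n: "1 \<le> n"
  defines "A \<equiv> \<lambda>m. acoef (complex_of_real s) m n"
  shows "(\<lambda>m. A m * cnj (A m)) sums 1"
    and "(\<lambda>m. (of_nat m * A m) * cnj (A m)) sums of_nat n"
    and "(\<lambda>m. (of_nat m * A m) * cnj (of_nat m * A m)) sums (of_nat n ^ 2 * (2 / (1 - of_real s ^ 2) - 1))"
proof -
  define f where "f = (\<lambda>z. Ta (complex_of_real s) z ^ n)"
  define F where "F = (\<lambda>z. z * deriv f z)"
  define g where "g = (\<lambda>z. 1 / (1 + complex_of_real s * z))"
  define h where "h = (\<lambda>z. g z ^ 2)"
  have R: "1 < 1/s" using s by (simp add: field_simps)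
  have sf: "\<And>z. norm z < 1/s \<Longrightarrow> (\<lambda>m. A m * z^m) sums f z"
    unfolding A_def f_def using T_series s by blast
  have sF: "\<And>z. norm z < 1/s \<Longrightarrow> (\<lambda>m. (of_nat m * A m) * z^m) sums F z"
    unfolding A_def F_def f_def using zT_series s by blast
  have sg: "\<And>z. norm z < 1/s \<Longrightarrow> (\<lambda>m. (- complex_of_real s) ^ m * z^m) sums g z"
    unfolding g_def using g_series s by blast
  obtain c :: "nat \<Rightarrow> complex" where c0: "c 0 = 1" and sh: "\<And>z. norm z < 1/s \<Longrightarrow> (\<lambda>m. c m * z^m) sums h z"
    using g2_series[OF s(1)] unfolding h_def g_def by blast
  have s1: "\<And>z. norm z < 1/s \<Longrightarrow> (\<lambda>m. (if m = 0 then 1 else 0) * z^m) sums (\<lambda>_. 1::complex) z"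
    using one_series by simp
  have nc: "norm (cis t) = 1" for t by simp
  have cg: "continuous_on {0..2*pi} (\<lambda>t. g (cis t))" by (rule powser_circle(2)[OF R sg])
  have ch: "continuous_on {0..2*pi} (\<lambda>t. h (cis t))" by (rule powser_circle(2)[OF R sh])
  have P1: "(\<lambda>m. (- complex_of_real s) ^ m * cnj (if m = 0 then 1 else 0)) sums (integral {0..2*pi} (\<lambda>t. g (cis t) * cnj 1) / (2*pi))"
    by (rule parseval[OF R sg s1])
  have "(\<lambda>m. (- complex_of_real s) ^ m * cnj (if m = 0 then 1 else 0)) = (\<lambda>m. if m = 0 then 1 else 0)"
    by auto
  then have "integral {0..2*pi} (\<lambda>t. g (cis t)) / (2*pi) = 1"
    using P1 sums_single[of 0 "\<lambda>_. 1::complex"] sums_unique2 by fastforce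
  then have Ig: "((\<lambda>t. g (cis t)) has_integral (2*pi)) {0..2*pi}"
    using integrable_continuous_interval[OF cg] by (auto simp: field_simps dest!: integrable_integral)
  have P2: "(\<lambda>m. c m * cnj (if m = 0 then 1 else 0)) sums (integral {0..2*pi} (\<lambda>t. h (cis t) * cnj 1) / (2*pi))"
    by (rule parseval[OF R sh s1])
  have "(\<lambda>m. c m * cnj (if m = 0 then 1 else 0)) = (\<lambda>m. if m = 0 then 1 else 0)"
    using c0 by auto
  then have "integral {0..2*pi} (\<lambda>t. h (cis t)) / (2*pi) = 1"
    using P2 sums_single[of 0 "\<lambda>_. 1::complex"] sums_unique2 by fastforce
  then have Ih: "((\<lambda>t. h (cis t)) has_integral (2*pi)) {0..2*pi}"
    using integrable_continuous_interval[OF ch] by (auto simp: field_simps dest!: integrable_integral)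
  have P3: "(\<lambda>m. (- complex_of_real s) ^ m * cnj ((- complex_of_real s) ^ m)) sums (integral {0..2*pi} (\<lambda>t. g (cis t) * cnj (g (cis t))) / (2*pi))"
    by (rule parseval[OF R sg sg])
  have "(\<lambda>m. (- complex_of_real s) ^ m * cnj ((- complex_of_real s) ^ m)) = (\<lambda>m. complex_of_real (s^2) ^ m)"
    by (auto simp: power_mult_distrib[symmetric] power2_eq_square)
  moreover have "(\<lambda>m. complex_of_real (s^2) ^ m) sums (1 / (1 - complex_of_real (s^2)))"
  proof (rule geometric_sums)
    have "s^2 < 1" using s by (simp add: power_less_one_iff)
    then show "norm (complex_of_real (s^2)) < 1" using s by (simp only: norm_of_real) simp
  qed
  ultimately have Igg0: "integral {0..2*pi} (\<lambda>t. g (cis t) * cnj (g (cis t))) / (2*pi) = 1 / (1 - complex_of_real (s^2))"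
    using P3 sums_unique2 by metis
  have Igg: "((\<lambda>t. g (cis t) * cnj (g (cis t))) has_integral (2*pi / (1 - complex_of_real (s^2)))) {0..2*pi}"
  proof -
    have "(\<lambda>t. g (cis t) * cnj (g (cis t))) integrable_on {0..2*pi}"
      by (intro integrable_continuous_interval continuous_intros cg continuous_on_cnj)
    then show ?thesis using Igg0 by (auto simp: field_simps dest!: integrable_integral)
  qed
  have "(\<lambda>m. A m * cnj (A m)) sums (integral {0..2*pi} (\<lambda>t. f (cis t) * cnj (f (cis t))) / (2*pi))"
    by (rule parseval[OF R sf sf])
  moreover have "f (cis t) * cnj (f (cis t)) = 1" for t
    unfolding f_def by (rule circ_Tn[OF s nc])
  ultimately show "(\<lambda>m. A m * cnj (A m)) sums 1" by (simp add: scaleR_conv_of_real)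
  have Fc: "F (cis t) * cnj (f (cis t)) = of_nat n * (g (cis t) + cnj (g (cis t)) - 1)" for t
  proof -
    have a: "F (cis t) * cnj (f (cis t)) = of_nat n * ((1 - of_real s ^ 2) * (g (cis t) * cnj (g (cis t))))"
      unfolding F_def f_def g_def using circ_zf[OF s nc n, of t] by (simp only: mult.assoc)
    have b: "(1 - of_real s ^ 2) * (g (cis t) * cnj (g (cis t))) = g (cis t) + cnj (g (cis t)) - 1"
      unfolding g_def by (rule circ_g[OF s nc])
    show ?thesis using a b by simp
  qed
  have "(\<lambda>m. (of_nat m * A m) * cnj (A m)) sums (integral {0..2*pi} (\<lambda>t. F (cis t) * cnj (f (cis t))) / (2*pi))"
    by (rule parseval[OF R sF sf])
  moreover have "integral {0..2*pi} (\<lambda>t. F (cis t) * cnj (f (cis t))) = of_nat n * (2*pi)"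
  proof -
    have "((\<lambda>t. of_nat n * (g (cis t) + cnj (g (cis t)) - 1)) has_integral (of_nat n * (2*pi + cnj (2*pi) - 2*pi))) {0..2*pi}"
      by (intro has_integral_mult_right has_integral_diff has_integral_add Ig
          has_integral_cnj[unfolded o_def, THEN iffD2])
        (use has_integral_const_real[of "1::complex" 0 "2*pi"] in \<open>simp add: scaleR_conv_of_real\<close>)
    then have "integral {0..2*pi} (\<lambda>t. of_nat n * (g (cis t) + cnj (g (cis t)) - 1)) = of_nat n * (2*pi + cnj (2*pi) - 2*pi)"
      by (rule integral_unique)
    then show ?thesis unfolding Fc by simp
  qed
  ultimately show "(\<lambda>m. (of_nat m * A m) * cnj (A m)) sums of_nat n" by simp
  have P5: "(\<lambda>m. (of_nat m * A m) * cnj (of_nat m * A m)) sums (integral {0..2*pi} (\<lambda>t. F (cis t) * cnj (F (cis t))) / (2*pi))"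
    by (rule parseval[OF R sF sF])
  have FF: "F (cis t) * cnj (F (cis t)) = of_nat n ^ 2 * (h (cis t) + cnj (h (cis t)) + 1
        + 2 * (g (cis t) * cnj (g (cis t))) - 2 * g (cis t) - 2 * cnj (g (cis t)))" for t
  proof -
    have ff: "f (cis t) * cnj (f (cis t)) = 1" unfolding f_def by (rule circ_Tn[OF s nc])
    have "F (cis t) * cnj (F (cis t)) = (F (cis t) * cnj (f (cis t))) * cnj (F (cis t) * cnj (f (cis t)))"
      using ff by (simp add: mult_ac)
    also have "\<dots> = of_nat n ^ 2 * (g (cis t) + cnj (g (cis t)) - 1) * (cnj (g (cis t)) + g (cis t) - 1)"
      unfolding Fc by (simp add: power2_eq_square mult_ac)
    also have "\<dots> = of_nat n ^ 2 * (h (cis t) + cnj (h (cis t)) + 1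
        + 2 * (g (cis t) * cnj (g (cis t))) - 2 * g (cis t) - 2 * cnj (g (cis t)))"
      unfolding h_def by (simp add: power2_eq_square algebra_simps)
    finally show ?thesis .
  qed
  have IFF: "integral {0..2*pi} (\<lambda>t. F (cis t) * cnj (F (cis t))) = of_nat n ^ 2 * (2*pi * (2 / (1 - of_real s ^ 2) - 1))"
  proof -
    have "((\<lambda>t. of_nat n ^ 2 * (h (cis t) + cnj (h (cis t)) + 1
        + 2 * (g (cis t) * cnj (g (cis t))) - 2 * g (cis t) - 2 * cnj (g (cis t)))) has_integral
        (of_nat n ^ 2 * (2*pi + cnj (2*pi) + 2*pi + 2 * (2*pi / (1 - complex_of_real (s^2))) - 2 * complex_of_real (2*pi) - 2 * cnj (2*pi)))) {0..2*pi}"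
      by (intro has_integral_mult_right has_integral_diff has_integral_add Ih Ig Igg
          has_integral_cnj[unfolded o_def, THEN iffD2])
        (use has_integral_const_real[of "1::complex" 0 "2*pi"] in \<open>simp add: scaleR_conv_of_real\<close>)
    then have "integral {0..2*pi} (\<lambda>t. of_nat n ^ 2 * (h (cis t) + cnj (h (cis t)) + 1
        + 2 * (g (cis t) * cnj (g (cis t))) - 2 * g (cis t) - 2 * cnj (g (cis t)))) =
        (of_nat n ^ 2 * (2*pi + cnj (2*pi) + 2*pi + 2 * (2*pi / (1 - complex_of_real (s^2))) - 2 * complex_of_real (2*pi) - 2 * cnj (2*pi)))"
      by (rule integral_unique)
    then show ?thesis unfolding FF by (simp add: field_simps)
  qed
  show "(\<lambda>m. (of_nat m * A m) * cnj (of_nat m * A m)) sums (of_nat n ^ 2 * (2 / (1 - of_real s ^ 2) - 1))"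
    using P5 unfolding IFF by simp
qed


definition GG :: "real \<Rightarrow> complex fps" where
  "GG s = (fps_const (complex_of_real s) + fps_X) * inverse (1 + fps_const (complex_of_real s) * fps_X)"

lemma T_fps: "(\<lambda>z. Ta (complex_of_real s) z ^ n) has_fps_expansion (GG s ^ n)"
proof -
  have "(\<lambda>z. ((complex_of_real s + z) * inverse (1 + complex_of_real s * z)) ^ n) has_fps_expansion (GG s ^ n)"
    unfolding GG_def
    by (intro has_fps_expansion_power has_fps_expansion_mult has_fps_expansion_inverse
        has_fps_expansion_add has_fps_expansion_const has_fps_expansion_fps_X has_fps_expansion_cmult_left
        has_fps_expansion_1) simp
  moreover have "(\<lambda>z. ((complex_of_real s + z) * inverse (1 + complex_of_real s * z)) ^ n) = (\<lambda>z. Ta (complex_of_real s) z ^ n)"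
    by (simp add: Ta_real divide_inverse)
  ultimately show ?thesis by simp
qed

lemma acoef_fps: "acoef (complex_of_real s) m n = fps_nth (GG s ^ n) m"
  using fps_nth_fps_expansion[OF T_fps, of s n m] by (simp add: acoef_def)

lemma GG_ode:
  assumes "1 \<le> n"
  shows "(fps_const (complex_of_real s) + fps_X) * (1 + fps_const (complex_of_real s) * fps_X) * fps_deriv (GG s ^ n)
     = fps_const (of_nat n) * (1 - fps_const (complex_of_real s) * fps_const (complex_of_real s)) * GG s ^ n"
proof -
  let ?c = "fps_const (complex_of_real s)"
  let ?D = "1 + ?c * fps_X"
  let ?G = "GG s"
  have D0: "?D $ 0 \<noteq> 0" by simp
  have DG: "?D * ?G = ?c + fps_X"
    unfolding GG_def using inverse_mult_eq_1'[OF D0] by (simp add: algebra_simps)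
  have "fps_deriv (?D * ?G) = 1" unfolding DG by simp
  then have DG': "?D * fps_deriv ?G = 1 - ?c * ?G" by (simp add: algebra_simps)
  have pw: "?G * ?G ^ (n - 1) = ?G ^ n" using assms by (cases n) auto
  have "(?c + fps_X) * ?D * fps_deriv (?G ^ n) = of_nat n * (?c + fps_X) * (?D * fps_deriv ?G) * ?G ^ (n - 1)"
    by (simp add: fps_deriv_power' algebra_simps)
  also have "\<dots> = of_nat n * ((?D * ?G) * (1 - ?c * ?G)) * ?G ^ (n - 1)"
    unfolding DG' DG by (simp add: algebra_simps)
  also have "(?D * ?G) * (1 - ?c * ?G) = ?G * (?D - ?c * (?c + fps_X))"
    unfolding DG[symmetric] by (simp add: algebra_simps)
  also have "?D - ?c * (?c + fps_X) = 1 - ?c * ?c"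
    by (simp only: algebra_simps)
  finally have "(?c + fps_X) * ?D * fps_deriv (?G ^ n) = of_nat n * (1 - ?c * ?c) * (?G * ?G ^ (n - 1))"
    by (simp only: algebra_simps)
  then show ?thesis unfolding pw fps_of_nat[symmetric] by (simp only: algebra_simps)
qed

lemma recurrence:
  fixes s :: real
  assumes "1 \<le> n"
  defines "A \<equiv> \<lambda>m. acoef (complex_of_real s) m n"
  shows "complex_of_real s * A 1 = of_nat n * (1 - complex_of_real s ^ 2) * A 0"
    and "complex_of_real s * of_nat (m + 2) * A (m + 2) + (1 + complex_of_real s ^ 2) * of_nat (m + 1) * A (m + 1)
          + complex_of_real s * of_nat m * A m = of_nat n * (1 - complex_of_real s ^ 2) * A (m + 1)"
proof -
  let ?c = "fps_const (complex_of_real s)"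
  let ?Y = "fps_deriv (GG s ^ n)"
  have e: "(?c + fps_X) * (1 + ?c * fps_X) * ?Y = ?c * ?Y + (fps_X * ?Y) + ?c * (?c * (fps_X * ?Y)) + ?c * (fps_X * (fps_X * ?Y))"
    by (simp add: algebra_simps)
  have e2: "fps_const (of_nat n) * (1 - ?c * ?c) * GG s ^ n = fps_const (of_nat n) * GG s ^ n - fps_const (of_nat n) * (?c * (?c * GG s ^ n))"
    by (simp only: right_diff_distrib left_diff_distrib mult_1_right mult.assoc)
  note E = GG_ode[OF assms(1), of s, unfolded e e2]
  have Ak: "A k = fps_nth (GG s ^ n) k" for k unfolding A_def by (rule acoef_fps)
  from arg_cong[OF E, of "\<lambda>F. fps_nth F 0"] show "complex_of_real s * A 1 = of_nat n * (1 - complex_of_real s ^ 2) * A 0"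
    unfolding Ak by (simp add: algebra_simps power2_eq_square)
  from arg_cong[OF E, of "\<lambda>F. fps_nth F (m + 1)"] show "complex_of_real s * of_nat (m + 2) * A (m + 2) + (1 + complex_of_real s ^ 2) * of_nat (m + 1) * A (m + 1)
          + complex_of_real s * of_nat m * A m = of_nat n * (1 - complex_of_real s ^ 2) * A (m + 1)"
    unfolding Ak by (cases m) (simp_all add: algebra_simps power2_eq_square)
qed


lemma real_coeffs:
  fixes s :: real
  assumes s: "0 < s" "s < 1" and n: "1 \<le> n"
  obtains r :: "nat \<Rightarrow> real" where
    "\<And>m. acoef (complex_of_real s) m n = complex_of_real (r m)"
    "(\<lambda>m. r m ^ 2) sums 1"
    "(\<lambda>m. real m * r m ^ 2) sums real n"
    "(\<lambda>m. real m ^ 2 * r m ^ 2) sums (real n ^ 2 * (2 / (1 - s ^ 2) - 1))"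
    "\<And>m. s * real (m + 2) * r (m + 2) + (1 + s ^ 2) * real (m + 1) * r (m + 1) + s * real m * r m
          = real n * (1 - s ^ 2) * r (m + 1)"
proof -
  define A where "A = (\<lambda>m. acoef (complex_of_real s) m n)"
  note rec = recurrence[OF n, of s]
  have A0: "A 0 = complex_of_real (s ^ n)" unfolding A_def acoef_def by (simp add: Ta_real)
  have real2: "A m \<in> \<real> \<and> A (m + 1) \<in> \<real>" for m
  proof (induction m)
    case 0
    have "A 1 = of_nat n * (1 - complex_of_real s ^ 2) * A 0 / complex_of_real s"
      using rec(1) s by (simp add: field_simps A_def)
    then show ?case using A0 by simp
  next
    case (Suc m)
    obtain u v where uv: "A m = of_real u" "A (m+1) = of_real v" using Suc by (auto elim!: Reals_cases)
    have rec2: "complex_of_real s * of_nat (m + 2) * A (m + 2) + (1 + complex_of_real s ^ 2) * of_nat (m + 1) * A (m + 1)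
          + complex_of_real s * of_nat m * A m = of_nat n * (1 - complex_of_real s ^ 2) * A (m + 1)"
      unfolding A_def by (rule rec(2))
    have e1: "complex_of_real s * of_nat (m + 2) * A (m + 2) = of_nat n * (1 - complex_of_real s ^ 2) * A (m + 1)
          - (1 + complex_of_real s ^ 2) * of_nat (m + 1) * A (m + 1) - complex_of_real s * of_nat m * A m"
      using rec2 by (simp add: eq_diff_eq ac_simps)
    have "complex_of_real s * of_nat (m + 2) * A (m + 2) = complex_of_real (real n * (1 - s ^ 2) * v
          - (1 + s ^ 2) * real (m + 1) * v - s * real m * u)"
      unfolding e1 uv by simp
    moreover have "complex_of_real s * of_nat (m + 2) \<noteq> 0"
    proof -
      have "complex_of_nat (m + 2) \<noteq> 0" by (simp only: of_nat_eq_0_iff)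
      then show ?thesis using s by simp
    qed
    ultimately have "A (m + 2) = complex_of_real (real n * (1 - s ^ 2) * v
          - (1 + s ^ 2) * real (m + 1) * v - s * real m * u) / (complex_of_real s * of_nat (m + 2))"
      by (simp add: eq_divide_eq ac_simps)
    then have "A (m + 2) \<in> \<real>" by simp
    then show ?case using Suc by (simp add: add.commute)
  qed
  define r where "r = (\<lambda>m. Re (A m))"
  have Ar: "A m = complex_of_real (r m)" for m using real2[of m] unfolding r_def by (simp add: complex_is_Real_iff complex_eq_iff)
  have Ar': "acoef (complex_of_real s) m n = complex_of_real (r m)" for m using Ar[of m] by (simp add: A_def)
  note M = moments[OF s n]
  show ?thesis
  proof (rule that)
    show "acoef (complex_of_real s) m n = complex_of_real (r m)" for m using Ar[of m] by (simp add: A_def)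
    have "(\<lambda>m. complex_of_real (r m ^ 2)) sums complex_of_real 1"
      using M(1) unfolding Ar' by (simp add: power2_eq_square)
    then show "(\<lambda>m. r m ^ 2) sums 1" by (simp only: sums_of_real_iff)
  next
    have "(\<lambda>m. complex_of_real (real m * r m ^ 2)) sums complex_of_real (real n)"
      using M(2) unfolding Ar' by (simp add: power2_eq_square mult_ac)
    then show "(\<lambda>m. real m * r m ^ 2) sums real n" by (simp only: sums_of_real_iff)
  next
    have "(\<lambda>m. complex_of_real (real m ^ 2 * r m ^ 2)) sums complex_of_real (real n ^ 2 * (2 / (1 - s ^ 2) - 1))"
      using M(3) unfolding Ar' by (simp add: power2_eq_square mult_ac)
    then show "(\<lambda>m. real m ^ 2 * r m ^ 2) sums (real n ^ 2 * (2 / (1 - s ^ 2) - 1))" by (simp only: sums_of_real_iff)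
  next
    fix m
    have "complex_of_real (s * real (m + 2) * r (m + 2) + (1 + s ^ 2) * real (m + 1) * r (m + 1) + s * real m * r m)
          = complex_of_real (real n * (1 - s ^ 2) * r (m + 1))"
      using rec(2)[of m] unfolding Ar' by simp
    then show "s * real (m + 2) * r (m + 2) + (1 + s ^ 2) * real (m + 1) * r (m + 1) + s * real m * r m
          = real n * (1 - s ^ 2) * r (m + 1)" by (simp only: of_real_eq_iff)
  qed
qed


lemma gstep:
  fixes y0 y1 y2 c0 c1 \<eta> d :: real
  assumes rec: "y2 = 2 * c1 * y1 - y0" and c0: "\<bar>c0\<bar> \<le> 1 - \<eta>" and c1: "\<bar>c1\<bar> \<le> 1 - \<eta>"
    and eta: "0 < \<eta>" and d: "\<bar>c0 - c1\<bar> \<le> d"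
  shows "y1^2 + y2^2 - 2 * c1 * y1 * y2 \<le> (1 + d / \<eta>) * (y0^2 + y1^2 - 2 * c0 * y0 * y1)"
    and "y0^2 + y1^2 - 2 * c0 * y0 * y1 \<le> (1 + d / \<eta>) * (y1^2 + y2^2 - 2 * c1 * y1 * y2)"
    and "\<eta> * (y0^2 + y1^2) \<le> y0^2 + y1^2 - 2 * c0 * y0 * y1"
    and "y0^2 + y1^2 - 2 * c0 * y0 * y1 \<le> 2 * (y0^2 + y1^2)"
proof -
  define P where "P = y0^2 + y1^2"
  define Q0 where "Q0 = y0^2 + y1^2 - 2 * c0 * y0 * y1"
  define Q1 where "Q1 = y1^2 + y2^2 - 2 * c1 * y1 * y2"
  have Q1e: "Q1 = P - 2 * c1 * y0 * y1" unfolding Q1_def P_def rec by (simp add: power2_eq_square algebra_simps)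
  have yy: "\<bar>2 * y0 * y1\<bar> \<le> P" unfolding P_def
  proof -
    have "0 \<le> (y0 - y1)^2" "0 \<le> (y0 + y1)^2" by simp_all
    then show "\<bar>2 * y0 * y1\<bar> \<le> y0^2 + y1^2" by (simp add: abs_le_iff power2_eq_square algebra_simps)
  qed
  have P0: "0 \<le> P" unfolding P_def by simp
  have b: "\<bar>c * (2 * y0 * y1)\<bar> \<le> (1 - \<eta>) * P" if "\<bar>c\<bar> \<le> 1 - \<eta>" for c
  proof -
    have "\<bar>c * (2 * y0 * y1)\<bar> = \<bar>c\<bar> * \<bar>2 * y0 * y1\<bar>" by (simp add: abs_mult)
    also have "\<dots> \<le> (1 - \<eta>) * P" using that yy by (intro mult_mono) auto
    finally show ?thesis .
  qed
  have Q0P: "\<eta> * P \<le> Q0" using b[OF c0] unfolding Q0_def P_def by (simp add: abs_le_iff algebra_simps)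
  have Q1P: "\<eta> * P \<le> Q1" using b[OF c1] unfolding Q1e by (simp add: abs_le_iff algebra_simps)
  have diff: "\<bar>Q1 - Q0\<bar> \<le> d * P"
  proof -
    have "Q1 - Q0 = (c0 - c1) * (2 * y0 * y1)" unfolding Q1e Q0_def P_def by (simp add: algebra_simps)
    then have "\<bar>Q1 - Q0\<bar> = \<bar>c0 - c1\<bar> * \<bar>2 * y0 * y1\<bar>" by (simp add: abs_mult)
    also have "\<dots> \<le> d * P" using d yy by (intro mult_mono) auto
    finally show ?thesis .
  qed
  have d0: "0 \<le> d" using d by simp
  have "d * P \<le> d / \<eta> * Q0"
  proof -
    have "d * P = d / \<eta> * (\<eta> * P)" using eta by simp
    also have "\<dots> \<le> d / \<eta> * Q0" using Q0P d0 eta by (intro mult_left_mono) auto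
    finally show ?thesis .
  qed
  then show "y1^2 + y2^2 - 2 * c1 * y1 * y2 \<le> (1 + d / \<eta>) * (y0^2 + y1^2 - 2 * c0 * y0 * y1)"
    using diff unfolding Q0_def[symmetric] Q1_def[symmetric] by (simp add: abs_le_iff algebra_simps)
  have "d * P \<le> d / \<eta> * Q1"
  proof -
    have "d * P = d / \<eta> * (\<eta> * P)" using eta by simp
    also have "\<dots> \<le> d / \<eta> * Q1" using Q1P d0 eta by (intro mult_left_mono) auto
    finally show ?thesis .
  qed
  then show "y0^2 + y1^2 - 2 * c0 * y0 * y1 \<le> (1 + d / \<eta>) * (y1^2 + y2^2 - 2 * c1 * y1 * y2)"
    using diff unfolding Q0_def[symmetric] Q1_def[symmetric] by (simp add: abs_le_iff algebra_simps)
  show "\<eta> * (y0^2 + y1^2) \<le> y0^2 + y1^2 - 2 * c0 * y0 * y1" using Q0P unfolding Q0_def P_def .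
  have ep: "0 \<le> \<eta> * P" using eta P0 by simp
  have "\<bar>c0 * (2 * y0 * y1)\<bar> \<le> P" using b[OF c0] ep by (simp add: left_diff_distrib)
  then show "y0^2 + y1^2 - 2 * c0 * y0 * y1 \<le> 2 * (y0^2 + y1^2)" unfolding P_def
    by (simp add: abs_le_iff algebra_simps)
qed

lemma giter:
  fixes Q :: "nat \<Rightarrow> real"
  assumes rho: "1 \<le> \<rho>"
    and step: "\<And>k. a \<le> k \<Longrightarrow> k < b \<Longrightarrow> Q (k+1) \<le> \<rho> * Q k \<and> Q k \<le> \<rho> * Q (k+1)"
  shows "a \<le> i \<Longrightarrow> i + d \<le> b \<Longrightarrow> Q i \<le> \<rho>^d * Q (i + d) \<and> Q (i + d) \<le> \<rho>^d * Q i"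
proof (induction d)
  case 0
  then show ?case by simp
next
  case (Suc d)
  then have IH: "Q i \<le> \<rho>^d * Q (i + d)" "Q (i + d) \<le> \<rho>^d * Q i" by auto
  have st: "Q (i + d + 1) \<le> \<rho> * Q (i + d)" "Q (i + d) \<le> \<rho> * Q (i + d + 1)"
    using step[of "i + d"] Suc.prems by auto
  have p0: "0 \<le> \<rho>^d" using rho by simp
  have "Q i \<le> \<rho>^d * (\<rho> * Q (i + d + 1))"
    using IH(1) mult_left_mono[OF st(2) p0] by linarith
  moreover have "Q (i + d + 1) \<le> \<rho> * (\<rho>^d * Q i)"
    using st(1) mult_left_mono[OF IH(2), of \<rho>] rho by linarith
  ultimately show ?case by (simp add: mult_ac)
qed


definition alp :: "real \<Rightarrow> real" where "alp s = (3 - 2* s) / (3*(1+s))"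
definition bet :: "real \<Rightarrow> real" where "bet s = (5 + 3* s) / (5*(1-s))"
definition bet2 :: "real \<Rightarrow> real" where "bet2 s = (5 + 4* s) / (5*(1-s))"
definition mu :: "real \<Rightarrow> real" where "mu s = 2* s / (3*(1+s))"
definition eta :: "real \<Rightarrow> real" where "eta s = (1-s)^2 / 18"
definition G0 :: "real \<Rightarrow> real" where "G0 s = 2* s^2 / (3*(1-s^2))"
definition KK :: "real \<Rightarrow> real" where "KK s = (bet s - alp s)^2 / 4"

lemma consts_pos:
  assumes "0 < s" "s < 1"
  shows "0 < alp s" "alp s < 1" "1 < bet s" "bet s < bet2 s" "0 < G0 s" "0 < KK s" "0 < eta s" "0 < mu s" "mu s < 1/3"
    "alp s \<le> 1 - 2 * mu s" "bet2 s * (1 - s) < 1 + s"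
proof -
  have a: "1 - s > 0" "1 + s > 0" using assms by auto
  show "0 < alp s" using assms by (simp add: alp_def)
  show "alp s < 1" using assms a by (simp add: alp_def field_simps)
  show b1: "1 < bet s" using assms a by (simp add: bet_def field_simps)
  show "bet s < bet2 s" using assms a by (simp add: bet_def bet2_def field_simps)
  have "s^2 < 1" using assms by (simp add: power_less_one_iff)
  then show "0 < G0 s" using assms by (simp add: G0_def)
  show "0 < KK s" using b1 \<open>alp s < 1\<close> by (simp add: KK_def)
  show "0 < eta s" using assms by (simp add: eta_def)
  show "0 < mu s" using assms by (simp add: mu_def)
  show "mu s < 1/3" using assms a by (simp add: mu_def field_simps)
  show "alp s \<le> 1 - 2 * mu s" using assms a by (simp add: mu_def alp_def field_simps)
  show "bet2 s * (1 - s) < 1 + s" using assms a by (simp add: bet2_def field_simps)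
qed

lemma G0_identity:
  assumes "0 < s" "s < 1"
  shows "- (2 / (1 - s^2) - 1) + (alp s + bet s) - alp s * bet s = G0 s"
proof -
  have "s^2 < 1" using assms by (simp add: power_less_one_iff)
  then have a: "1 - s \<noteq> 0" "1 + s \<noteq> 0" "1 - s^2 \<noteq> 0" using assms by auto
  have sq: "1 - s^2 = (1 - s) * (1 + s)" by (simp add: power2_eq_square algebra_simps)
  have h1: "1 - alp s = 5* s/(3*(1+s))" using a unfolding alp_def by (simp add: field_simps)
  have h2: "bet s - 1 = 8* s/(5*(1-s))" using a unfolding bet_def by (simp add: field_simps)
  have h3: "alp s + bet s - alp s * bet s = 1 + (1 - alp s) * (bet s - 1)" by (simp add: algebra_simps)
  have h4: "(1 - alp s) * (bet s - 1) = 8 * s^2 / (3 * (1 - s^2))"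
    unfolding h1 h2 sq using a by (simp add: field_simps power2_eq_square)
  have h5: "2 - 2 / (1 - s^2) = - 2 * s^2 / (1 - s^2)" using a by (simp add: field_simps)
  have "- (2 / (1 - s^2) - 1) + (alp s + bet s) - alp s * bet s = (2 - 2 / (1 - s^2)) + (1 - alp s) * (bet s - 1)"
    using h3 by simp
  also have "\<dots> = - 2 * s^2 / (1 - s^2) + 8 * s^2 / (3 * (1 - s^2))" unfolding h4 h5 ..
  also have "\<dots> = G0 s"
  proof -
    have gen: "- 2 * x / t + 8 * x / (3 * t) = 2 * x / (3 * t)" if "t \<noteq> 0" for x t :: real
      using that by (simp add: field_simps)
    show ?thesis unfolding G0_def by (rule gen[OF a(3)])
  qed
  finally show ?thesis .
qed

lemma mass:
  fixes r :: "nat \<Rightarrow> real" and s :: real and n :: nat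
  assumes s: "0 < s" "s < 1" and n: "1 \<le> n"
    and S0: "(\<lambda>m. r m ^ 2) sums 1"
    and S1: "(\<lambda>m. real m * r m ^ 2) sums real n"
    and S2: "(\<lambda>m. real m ^ 2 * r m ^ 2) sums (real n ^ 2 * (2 / (1 - s ^ 2) - 1))"
  shows "\<exists>m0. alp s * n \<le> m0 \<and> m0 \<le> bet s * n \<and> G0 s / (KK s * (bet s + 1) * n) \<le> r m0 ^ 2"
proof -
  define \<alpha> where "\<alpha> = alp s"
  define \<beta> where "\<beta> = bet s"
  note cp = consts_pos[OF s]
  have np: "0 < real n" using n by simp
  define w where "w = (\<lambda>m::nat. (real m - \<alpha> * n) * (\<beta> * n - real m))"
  have ws: "(\<lambda>m. w m * r m ^ 2) sums (real n ^ 2 * G0 s)"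
  proof -
    have "(\<lambda>m. (- (real m ^ 2 * r m ^ 2) + ((\<alpha> + \<beta>) * n) * (real m * r m ^ 2)) - (\<alpha> * \<beta> * n^2) * r m ^ 2)
       sums ((- (real n ^ 2 * (2 / (1 - s ^ 2) - 1)) + ((\<alpha> + \<beta>) * n) * real n) - (\<alpha> * \<beta> * n^2) * 1)"
      by (intro sums_diff sums_add sums_minus sums_mult S0 S1 S2)
    moreover have "(- (real n ^ 2 * (2 / (1 - s ^ 2) - 1)) + ((\<alpha> + \<beta>) * n) * real n) - (\<alpha> * \<beta> * n^2) * 1
        = real n ^ 2 * (- (2 / (1 - s^2) - 1) + (\<alpha> + \<beta>) - \<alpha> * \<beta>)"
      by (simp add: algebra_simps power2_eq_square)
    moreover have "(\<lambda>m. (- (real m ^ 2 * r m ^ 2) + ((\<alpha> + \<beta>) * n) * (real m * r m ^ 2)) - (\<alpha> * \<beta> * n^2) * r m ^ 2)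
       = (\<lambda>m. w m * r m ^ 2)"
      unfolding w_def by (rule ext) (simp add: algebra_simps power2_eq_square)
    ultimately show ?thesis using G0_identity[OF s] unfolding \<alpha>_def \<beta>_def by simp
  qed
  define W where "W = {m::nat. \<alpha> * n \<le> real m \<and> real m \<le> \<beta> * n}"
  have Wsub: "W \<subseteq> {..nat \<lfloor>\<beta> * n\<rfloor>}"
    unfolding W_def by (auto simp: le_nat_floor le_floor_iff)
  have fW: "finite W" using Wsub finite_subset by blast
  have cW: "real (card W) \<le> (\<beta> + 1) * n"
  proof -
    have "card W \<le> card {..nat \<lfloor>\<beta> * n\<rfloor>}" using Wsub by (intro card_mono) auto
    also have "\<dots> = nat \<lfloor>\<beta> * n\<rfloor> + 1" by simp
    finally have "real (card W) \<le> real (nat \<lfloor>\<beta> * n\<rfloor>) + 1" by linarith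
    also have "real (nat \<lfloor>\<beta> * n\<rfloor>) \<le> \<beta> * n"
      using cp np unfolding \<beta>_def by (simp add: of_nat_nat)
    finally show ?thesis using n by (simp add: algebra_simps)
  qed
  have le1: "w m * r m ^ 2 \<le> (if m \<in> W then w m * r m ^ 2 else 0)" for m
  proof (cases "m \<in> W")
    case False
    have "\<alpha> * n < \<beta> * n" using cp np unfolding \<alpha>_def \<beta>_def by simp
    then have "w m \<le> 0" using False unfolding W_def w_def
      by (auto simp: mult_nonneg_nonpos mult_nonpos_nonneg not_le intro: mult_nonpos_nonneg mult_nonneg_nonpos)
    then show ?thesis using False by (simp add: mult_nonpos_nonneg)
  qed simp
  have "real n ^ 2 * G0 s \<le> (\<Sum>m\<in>W. w m * r m ^ 2)"
    by (rule sums_le[OF le1 ws sums_If_finite_set[OF fW]])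
  also have "\<dots> \<le> (\<Sum>m\<in>W. (KK s * real n ^ 2) * r m ^ 2)"
  proof (rule sum_mono)
    fix m assume "m \<in> W"
    have "w m \<le> KK s * real n ^ 2"
    proof -
      have "KK s * real n ^ 2 - w m = (real m - \<alpha> * n - (\<beta> - \<alpha>) * n / 2)^2"
        unfolding KK_def w_def \<alpha>_def[symmetric] \<beta>_def[symmetric] by (simp add: power2_eq_square field_simps)
      then show ?thesis by (metis diff_ge_0_iff_ge zero_le_power2)
    qed
    then show "w m * r m ^ 2 \<le> (KK s * real n ^ 2) * r m ^ 2" by (simp add: mult_right_mono)
  qed
  also have "\<dots> = (KK s * real n ^ 2) * (\<Sum>m\<in>W. r m ^ 2)" by (simp add: sum_distrib_left)
  finally have "real n ^ 2 * G0 s \<le> (KK s * real n ^ 2) * (\<Sum>m\<in>W. r m ^ 2)" .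
  then have sumW: "G0 s / KK s \<le> (\<Sum>m\<in>W. r m ^ 2)"
    using cp np by (simp add: field_simps)
  have Wne: "card W > 0"
  proof (rule ccontr)
    assume "\<not> card W > 0"
    then have "W = {}" using fW by auto
    moreover have "G0 s / KK s > 0" using cp by simp
    ultimately show False using sumW by simp
  qed
  obtain m0 where m0: "m0 \<in> W" "(\<Sum>m\<in>W. r m ^ 2) / card W \<le> r m0 ^ 2"
  proof (rule ccontr)
    assume "\<not> thesis"
    then have "\<forall>m\<in>W. r m ^ 2 < (\<Sum>m\<in>W. r m ^ 2) / card W" using that by force
    then have "(\<Sum>m\<in>W. r m ^ 2) < real (card W) * ((\<Sum>m\<in>W. r m ^ 2) / card W)"
      using Wne by (intro sum_bounded_above_strict) auto
    then show False using Wne by simp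
  qed
  have "G0 s / (KK s * (bet s + 1) * n) = (G0 s / KK s) / ((\<beta> + 1) * n)"
    unfolding \<beta>_def by (simp add: field_simps)
  also have "\<dots> \<le> (\<Sum>m\<in>W. r m ^ 2) / card W"
    using sumW cW Wne cp np sum_nonneg[of W "\<lambda>m. r m ^ 2"] by (intro frac_le) (auto simp: \<beta>_def intro!: divide_nonneg_pos)
  also have "\<dots> \<le> r m0 ^ 2" by (rule m0(2))
  finally show ?thesis using m0(1) unfolding W_def \<alpha>_def \<beta>_def by blast
qed


definition cc :: "real \<Rightarrow> nat \<Rightarrow> nat \<Rightarrow> real" where
  "cc s n k = (real n * (1 - s^2) - (1 + s^2) * real k) / (2 * s * real k)"

lemma cc_bound:
  assumes s: "0 < s" "s < 1" and n: "1 \<le> n" and k1: "alp s * n \<le> real k" and k2: "real k \<le> bet2 s * n"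
  shows "\<bar>cc s n k\<bar> \<le> 1 - eta s"
proof -
  note cp = consts_pos[OF s]
  have np: "0 < real n" using n by simp
  have kp: "0 < real k" using k1 cp np by (smt (verit) mult_pos_pos)
  define x where "x = real n / real k"
  have cx: "cc s n k = ((1 - s^2) * x - (1 + s^2)) / (2 * s)"
    unfolding cc_def x_def using kp s by (simp add: field_simps)
  have x1: "x \<le> 1 / alp s" unfolding x_def using k1 kp cp np by (simp add: field_simps)
  have x2: "1 / bet2 s \<le> x" unfolding x_def using k2 kp cp np by (simp add: field_simps)
  have s2: "0 < 1 - s^2" using s by (simp add: power_less_one_iff)
  have e1: "((1 - s^2) * (1 / alp s) - (1 + s^2)) / (2 * s) = 1 - (1+s)^2 / (2 * (3 - 2* s))"
    using s unfolding alp_def by (simp add: field_simps power2_eq_square)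
  have e2: "((1 - s^2) * (1 / bet2 s) - (1 + s^2)) / (2 * s) = -1 + (1-s)^2 / (2 * (5 + 4* s))"
  proof -
    have gen: "(A / D - B) / (2 * t) = C" if "D \<noteq> 0" "t \<noteq> 0" "A - B * D = 2 * t * D * C" for A B C D t :: real
      using that by (simp add: field_simps)
    have b: "1 / bet2 s = 5*(1-s)/(5+4* s)" unfolding bet2_def by simp
    have D: "5 + 4* s \<noteq> 0" using s by simp
    have "(1 - s^2) * (5*(1-s)) - (1 + s^2) * (5 + 4* s) = 2 * s * (5 + 4* s) * (-1 + (1-s)^2 / (2 * (5 + 4* s)))"
      using D by (simp add: field_simps power2_eq_square)
    then have "((1 - s^2) * (5*(1-s)) / (5 + 4* s) - (1 + s^2)) / (2 * s) = -1 + (1-s)^2 / (2 * (5 + 4* s))"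
      using D s by (intro gen) auto
    then show ?thesis unfolding b by (simp add: mult_ac)
  qed
  have "(1 - s^2)*x - (1+s^2) \<le> (1 - s^2)*(1/alp s) - (1+s^2)" using mult_left_mono[OF x1, of "1-s^2"] s2 by linarith
  then have up: "cc s n k \<le> 1 - (1+s)^2 / (2 * (3 - 2* s))"
    unfolding cx e1[symmetric] by (rule divide_right_mono) (use s in simp)
  have "(1 - s^2)*(1/bet2 s) - (1+s^2) \<le> (1 - s^2)*x - (1+s^2)" using mult_left_mono[OF x2, of "1-s^2"] s2 by linarith
  then have lo: "-1 + (1-s)^2 / (2 * (5 + 4* s)) \<le> cc s n k"
    unfolding cx e2[symmetric] by (rule divide_right_mono) (use s in simp)
  have "eta s \<le> (1+s)^2 / (2 * (3 - 2* s))"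
  proof -
    have "eta s \<le> 1/18" unfolding eta_def using s by (simp add: power_le_one)
    also have "1/18 \<le> (1::real) / (2 * (3 - 2* s))" using s by (simp add: field_simps)
    also have "\<dots> \<le> (1+s)^2 / (2 * (3 - 2* s))" using s by (intro divide_right_mono) (auto simp: one_le_power)
    finally show ?thesis .
  qed
  moreover have "eta s \<le> (1-s)^2 / (2 * (5 + 4* s))"
    unfolding eta_def using s by (intro divide_left_mono) auto
  ultimately show ?thesis using up lo by (simp add: abs_le_iff)
qed

lemma cc_diff:
  assumes s: "0 < s" "s < 1" and n: "1 \<le> n" and k1: "alp s * n \<le> real k"
  shows "\<bar>cc s n k - cc s n (k+1)\<bar> \<le> (1 - s^2) / (2 * s * alp s ^ 2 * n)"
proof -
  note cp = consts_pos[OF s]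
  have np: "0 < real n" using n by simp
  have kp: "0 < real k" using k1 cp np by (smt (verit) mult_pos_pos)
  have s2: "0 < 1 - s^2" using s by (simp add: power_less_one_iff)
  have c: "cc s n j = real n * (1-s^2) / (2* s*real j) - (1+s^2)/(2* s)" if "real j > 0" for j
    unfolding cc_def using that s by (simp add: field_simps)
  have e: "cc s n k - cc s n (k+1) = real n * (1 - s^2) / (2 * s * (real k * (real k + 1)))"
  proof -
    have k1p: "real (k+1) > 0" by simp
    have "cc s n k - cc s n (k+1) = real n * (1-s^2) / (2* s*real k) - real n * (1-s^2) / (2* s*real (k+1))"
      unfolding c[OF kp] c[OF k1p] by simp
    also have "\<dots> = real n * (1 - s^2) / (2 * s * (real k * (real k + 1)))"
    proof -
      have gen: "a / (2*t*x) - a / (2*t*(x+1)) = a / (2 * t * (x * (x + 1)))" if "t \<noteq> 0" "x \<noteq> 0" "x + 1 \<noteq> 0" for a t x :: real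
        using that by (simp add: divide_simps) (simp add: algebra_simps)
      show ?thesis using gen[of s "real k" "real n * (1 - s^2)"] kp s by (simp add: add.commute)
    qed
    finally show ?thesis .
  qed
  have "(alp s * n)^2 \<le> real k * (real k + 1)"
  proof -
    have "(alp s * n)^2 \<le> real k ^ 2" using k1 cp np by (intro power_mono) auto
    also have "\<dots> \<le> real k * (real k + 1)" by (simp add: power2_eq_square algebra_simps)
    finally show ?thesis .
  qed
  then have "real n * (1 - s^2) / (2 * s * (real k * (real k + 1))) \<le> real n * (1 - s^2) / (2 * s * (alp s * n)^2)"
    using s s2 np cp kp by (intro divide_left_mono mult_left_mono mult_pos_pos) auto
  also have "\<dots> = (1 - s^2) / (2 * s * alp s ^ 2 * n)" using np cp s by (simp add: field_simps power2_eq_square)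
  finally show ?thesis unfolding e using s s2 kp np by (simp add: abs_of_nonneg)
qed


definition C1 :: "real \<Rightarrow> real" where "C1 s = eta s * alp s ^ 2 * G0 s / (KK s * (bet s + 1))"
definition E0 :: "real \<Rightarrow> real" where "E0 s = exp ((1 - s^2) * (bet s - alp s) / (2 * s * alp s ^ 2 * eta s))"
definition c3 :: "real \<Rightarrow> real" where "c3 s = C1 s / (4 * E0 s)"

lemma c3_pos: "0 < s \<Longrightarrow> s < 1 \<Longrightarrow> 0 < c3 s"
  using consts_pos[of s] by (simp add: c3_def C1_def E0_def)

lemma qbounds:
  fixes y0 y1 c0 \<eta> :: real
  assumes "\<bar>c0\<bar> \<le> 1 - \<eta>" "0 < \<eta>"
  shows "\<eta> * (y0^2 + y1^2) \<le> y0^2 + y1^2 - 2 * c0 * y0 * y1"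
    and "y0^2 + y1^2 - 2 * c0 * y0 * y1 \<le> 2 * (y0^2 + y1^2)"
  using gstep(3,4)[of "2 * c0 * y1 - y0" c0 y1 y0 c0 \<eta> 0] assms by auto

lemma discrete_main:
  fixes r :: "nat \<Rightarrow> real" and s :: real and n :: nat
  assumes s: "0 < s" "s < 1" and n: "1 \<le> n" and nbig: "4 / mu s \<le> real n"
    and S0: "(\<lambda>m. r m ^ 2) sums 1"
    and S1: "(\<lambda>m. real m * r m ^ 2) sums real n"
    and S2: "(\<lambda>m. real m ^ 2 * r m ^ 2) sums (real n ^ 2 * (2 / (1 - s ^ 2) - 1))"
    and Rec: "\<And>m. s * real (m + 2) * r (m + 2) + (1 + s ^ 2) * real (m + 1) * r (m + 1) + s * real m * r m
          = real n * (1 - s ^ 2) * r (m + 1)"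
  shows "\<exists>E. finite E \<and> (\<forall>m\<in>E. (1 - 2 * mu s) * n \<le> real m \<and> real m \<le> (1 - mu s) * n)
           \<and> mu s / 4 * n \<le> real (card E) \<and> (\<forall>m\<in>E. c3 s / n \<le> r m ^ 2)"
proof -
  note cp = consts_pos[OF s]
  have np: "0 < real n" using n by simp
  define y where "y = (\<lambda>m. real m * r m)"
  define Q where "Q = (\<lambda>k. y k ^ 2 + y (k+1) ^ 2 - 2 * cc s n k * y k * y (k+1))"
  define dd where "dd = (1 - s^2) / (2 * s * alp s ^ 2 * n)"
  define \<rho> where "\<rho> = 1 + dd / eta s"
  have s2: "0 < 1 - s^2" using s by (simp add: power_less_one_iff)
  have dd0: "0 \<le> dd" unfolding dd_def using s2 s cp np by simp
  have rho1: "1 \<le> \<rho>" unfolding \<rho>_def using dd0 cp by simp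
  have yrec: "y (k+2) = 2 * cc s n (k+1) * y (k+1) - y k" for k
  proof -
    have k1: "real (k+1) \<noteq> 0" by simp
    have a: "2 * cc s n (k+1) * y (k+1) = (real n * (1-s^2) - (1+s^2) * real (k+1)) * r (k+1) / s"
    proof -
      have gen: "2 * (X / (2 * t * x)) * (x * u) = X * u / t" if "x \<noteq> 0" "t \<noteq> 0" for X t x u :: real
        using that by (simp add: field_simps)
      show ?thesis unfolding cc_def y_def by (rule gen[OF k1]) (use s in simp)
    qed
    have "s * y (k+2) = real n * (1 - s ^ 2) * r (k + 1) - (1 + s ^ 2) * real (k + 1) * r (k + 1) - s * y k"
      using Rec[of k] unfolding y_def by (simp add: algebra_simps)
    then show ?thesis unfolding a using s by (simp add: field_simps)
  qed
  have ccb: "\<bar>cc s n k\<bar> \<le> 1 - eta s" if "alp s * n \<le> real k" "real k \<le> bet s * n" for k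
    using cc_bound[OF s n that(1)] that(2) cp np by (smt (verit) mult_right_mono)
  have step: "Q (k+1) \<le> \<rho> * Q k \<and> Q k \<le> \<rho> * Q (k+1)" if "alp s * n \<le> real k" "real (k+1) \<le> bet s * n" for k
  proof -
    have c0: "\<bar>cc s n k\<bar> \<le> 1 - eta s" using ccb[OF that(1)] that(2) by simp
    have c1: "\<bar>cc s n (k+1)\<bar> \<le> 1 - eta s" using ccb[OF _ that(2)] that(1) by simp
    have d: "\<bar>cc s n k - cc s n (k+1)\<bar> \<le> dd" unfolding dd_def by (rule cc_diff[OF s n that(1)])
    note g = gstep(1,2)[OF yrec[of k] c0 c1 cp(7) d]
    show ?thesis using g unfolding Q_def \<rho>_def by (simp add: add.assoc)
  qed
  have Qlo: "eta s * (y k ^ 2 + y (k+1) ^ 2) \<le> Q k" and Qhi: "Q k \<le> 2 * (y k ^ 2 + y (k+1) ^ 2)"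
    if "alp s * n \<le> real k" "real k \<le> bet s * n" for k
    using qbounds[OF ccb[OF that] cp(7)] unfolding Q_def by auto
  obtain m0 where m0: "alp s * n \<le> real m0" "real m0 \<le> bet s * n" "G0 s / (KK s * (bet s + 1) * n) \<le> r m0 ^ 2"
    using mass[OF s n S0 S1 S2] by blast
  have Qm0: "C1 s * n \<le> Q m0"
  proof -
    have "C1 s * n = eta s * (alp s * n)^2 * (G0 s / (KK s * (bet s + 1) * n))"
    proof -
      have gen: "e * a^2 * g / D * x = e * (a * x)^2 * (g / (D * x))" if "x \<noteq> 0" "D \<noteq> 0" for e a g D x :: real
        using that by (simp add: field_simps power2_eq_square)
      have "KK s * (bet s + 1) \<noteq> 0" using cp by simp
      then show ?thesis unfolding C1_def using gen[of "real n" "KK s * (bet s + 1)"] np by (simp add: mult.assoc)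
    qed
    also have "\<dots> \<le> eta s * (real m0)^2 * r m0 ^ 2"
      using m0 cp np by (intro mult_mono mult_left_mono power_mono) auto
    also have "\<dots> = eta s * (y m0 ^ 2)" unfolding y_def by (simp add: power_mult_distrib)
    also have "\<dots> \<le> eta s * (y m0 ^ 2 + y (m0+1) ^ 2)" using cp by (intro mult_left_mono) auto
    also have "\<dots> \<le> Q m0" by (rule Qlo[OF m0(1,2)])
    finally show ?thesis .
  qed
  have Qall: "C1 s * n / E0 s \<le> Q m" if m: "alp s * n \<le> real m" "real m \<le> bet s * n" for m
  proof -
    have Qm0p: "0 \<le> Q m" using Qlo[OF m] cp by (smt (verit) mult_nonneg_nonneg zero_le_power2)
    define d where "d = (if m0 \<le> m then m - m0 else m0 - m)"
    have rd: "Q m0 \<le> \<rho> ^ d * Q m"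
    proof (cases "m0 \<le> m")
      case True
      have "Q m0 \<le> \<rho> ^ (m - m0) * Q (m0 + (m - m0))"
        using giter[OF rho1, of m0 m Q m0 "m - m0"] step True m m0 by force
      then show ?thesis using True unfolding d_def by simp
    next
      case False
      have "Q (m + (m0 - m)) \<le> \<rho> ^ (m0 - m) * Q m"
        using giter[OF rho1, of m m0 Q m "m0 - m"] step False m m0 by force
      then show ?thesis using False unfolding d_def by simp
    qed
    have dbound: "real d \<le> (bet s - alp s) * n"
      unfolding d_def using m m0 by (auto simp: algebra_simps of_nat_diff)
    have "\<rho> ^ d \<le> exp (dd / eta s) ^ d"
      unfolding \<rho>_def using dd0 cp by (intro power_mono) (use exp_ge_add_one_self[of "dd / eta s"] in auto)
    also have "\<dots> = exp (real d * (dd / eta s))" by (simp only: exp_of_nat_mult)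
    also have "\<dots> \<le> exp ((bet s - alp s) * n * (dd / eta s))"
      using dbound dd0 cp by (intro exp_le_cancel_iff[THEN iffD2] mult_right_mono) auto
    also have "(bet s - alp s) * n * (dd / eta s) = (1 - s^2) * (bet s - alp s) / (2 * s * alp s ^ 2 * eta s)"
      unfolding dd_def using np cp s by (simp add: field_simps)
    finally have "\<rho> ^ d \<le> E0 s" unfolding E0_def .
    then have "\<rho> ^ d * Q m \<le> E0 s * Q m" using Qm0p by (rule mult_right_mono)
    then have "C1 s * n \<le> E0 s * Q m" using Qm0 rd by linarith
    then show ?thesis using cp by (simp add: E0_def field_simps)
  qed
  define inJ where "inJ = (\<lambda>j::nat. (1 - 2 * mu s) * n \<le> real j \<and> real j \<le> (1 - mu s) * n)"
  have Jfacts: "alp s * n \<le> real j \<and> real j \<le> bet s * n \<and> 0 < real j \<and> real j \<le> real n" if "inJ j" for j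
  proof -
    have "alp s * n \<le> (1 - 2 * mu s) * n" using cp np by (intro mult_right_mono) auto
    moreover have "(1 - mu s) * n \<le> bet s * n" using cp np by (intro mult_right_mono) auto
    moreover have "0 < (1 - 2 * mu s) * n" using cp np by simp
    moreover have "(1 - mu s) * n \<le> real n" using cp np by (simp add: algebra_simps)
    ultimately show ?thesis using that unfolding inJ_def by linarith
  qed
  have rbig: "c3 s / n \<le> r j ^ 2" if "inJ j" "C1 s * n / (4 * E0 s) \<le> y j ^ 2" for j
  proof -
    have j: "0 < real j" "real j \<le> real n" using Jfacts[OF that(1)] by auto
    have "c3 s / n = (C1 s * n / (4 * E0 s)) / (real n)^2"
      unfolding c3_def using np by (simp add: field_simps power2_eq_square)
    also have "\<dots> \<le> y j ^ 2 / (real n)^2" using that(2) np by (intro divide_right_mono) auto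
    also have "\<dots> \<le> y j ^ 2 / (real j)^2" using j by (intro divide_left_mono power_mono mult_pos_pos) auto
    also have "\<dots> = r j ^ 2" unfolding y_def using j by (simp add: power_mult_distrib)
    finally show ?thesis .
  qed
  have either: "c3 s / n \<le> r j ^ 2 \<or> c3 s / n \<le> r (j+1) ^ 2" if "inJ j" "inJ (j+1)" for j
  proof -
    have "C1 s * n / E0 s \<le> Q j" using Qall Jfacts[OF that(1)] by blast
    also have "\<dots> \<le> 2 * (y j ^ 2 + y (j+1) ^ 2)" using Qhi Jfacts[OF that(1)] by blast
    finally have h: "C1 s * n / E0 s \<le> 2 * (y j ^ 2 + y (j+1) ^ 2)" .
    have eq: "C1 s * n / (4 * E0 s) = (C1 s * n / E0 s) / 4" by simp
    have "C1 s * n / (4 * E0 s) \<le> y j ^ 2 \<or> C1 s * n / (4 * E0 s) \<le> y (j+1) ^ 2"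
    proof (rule disjCI)
      assume "\<not> C1 s * n / (4 * E0 s) \<le> y (j+1) ^ 2"
      then show "C1 s * n / (4 * E0 s) \<le> y j ^ 2" using h eq by argo
    qed
    then show ?thesis using rbig that by blast
  qed
  define E where "E = {j. inJ j \<and> c3 s / n \<le> r j ^ 2}"
  have fE: "finite E"
  proof -
    have "E \<subseteq> {..n}"
    proof
      fix x assume "x \<in> E"
      then have "real x \<le> real n" unfolding E_def using Jfacts by blast
      then show "x \<in> {..n}" by simp
    qed
    then show ?thesis using finite_subset by blast
  qed
  define L where "L = nat \<lceil>(1 - 2 * mu s) * n\<rceil>"
  define M where "M = nat \<lfloor>mu s * n / 2\<rfloor>"
  have Lb: "(1 - 2 * mu s) * n \<le> real L" "real L \<le> (1 - 2 * mu s) * n + 1"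
    unfolding L_def using cp np by (auto simp: of_nat_nat)
  have Mb: "2 * real M \<le> mu s * n" "mu s * n / 4 \<le> real M"
  proof -
    have mp: "0 \<le> mu s * n / 2" using cp np by simp
    have "real M = of_int \<lfloor>mu s * n / 2\<rfloor>" unfolding M_def using mp by (simp add: of_nat_nat)
    then show "2 * real M \<le> mu s * n" "mu s * n / 4 \<le> real M"
      using of_int_floor_le[of "mu s * n / 2"] real_of_int_floor_gt_diff_one[of "mu s * n / 2"] nbig cp
      by (auto simp: field_simps)
  qed
  have pairJ: "inJ (L + 2*i) \<and> inJ (L + 2*i + 1)" if "i < M" for i
  proof -
    have "real (2*i + 1) \<le> 2 * real M - 1" using that by (simp add: of_nat_less_iff[symmetric] del: of_nat_less_iff)
    then show ?thesis using Lb Mb unfolding inJ_def by (simp add: algebra_simps)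
  qed
  have img: "{..<M} \<subseteq> (\<lambda>j. (j - L) div 2) ` E"
  proof
    fix i assume "i \<in> {..<M}"
    then have i: "i < M" by simp
    note pj = pairJ[OF i]
    show "i \<in> (\<lambda>j. (j - L) div 2) ` E"
    proof (cases "c3 s / n \<le> r (L + 2*i) ^ 2")
      case True
      then have "L + 2*i \<in> E" unfolding E_def using pj by simp
      moreover have "(L + 2*i - L) div 2 = i" by simp
      ultimately show ?thesis by (metis image_eqI)
    next
      case False
      then have "c3 s / n \<le> r (L + 2*i + 1) ^ 2" using either pj by blast
      then have "L + 2*i + 1 \<in> E" unfolding E_def using pj by simp
      moreover have "(L + 2*i + 1 - L) div 2 = i" by simp
      ultimately show ?thesis by (metis image_eqI)
    qed
  qed
  have "M \<le> card E"
  proof -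
    have "card {..<M} \<le> card ((\<lambda>j. (j - L) div 2) ` E)" using img fE by (intro card_mono) auto
    also have "\<dots> \<le> card E" by (rule card_image_le[OF fE])
    finally show ?thesis by simp
  qed
  then have "mu s / 4 * n \<le> real (card E)" using Mb by (simp add: of_nat_le_iff[symmetric] del: of_nat_le_iff)
  moreover have "\<forall>m\<in>E. (1 - 2 * mu s) * n \<le> real m \<and> real m \<le> (1 - mu s) * n" unfolding E_def inJ_def by auto
  moreover have "\<forall>m\<in>E. c3 s / n \<le> r m ^ 2" unfolding E_def by auto
  ultimately show ?thesis using fE by blast
qed


theorem mainTheorem13:
  fixes a :: real and \<tau> \<mu> :: real
  assumes "0 < a" "a < 1"
    and "\<tau> = (1 + a) / (1 - a)"
    and "inverse \<tau> = 1 - 3 * \<mu>"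
  shows "\<exists>\<delta>>0. \<forall>\<^sub>F n in sequentially.
           \<exists>E :: nat set. finite E
             \<and> (\<forall>m\<in>E. (1 - 2 * \<mu>) * real n \<le> real m \<and> real m \<le> (1 - \<mu>) * real n)
             \<and> real (card E) \<ge> \<delta> * real n
             \<and> (\<forall>m\<in>E. norm (acoef (complex_of_real a) m n) \<ge> \<delta> / sqrt (real n))"
proof -
  have s: "0 < a" "a < 1" using assms by auto
  note cp = consts_pos[OF s]
  have mu_eq: "\<mu> = mu a"
  proof -
    have "inverse \<tau> = (1 - a) / (1 + a)" using assms(3) by simp
    then have "1 - 3 * \<mu> = (1 - a) / (1 + a)" using assms(4) by simp
    then show ?thesis unfolding mu_def using s by (simp add: field_simps)
  qed
  define \<delta> where "\<delta> = min (mu a / 4) (sqrt (c3 a))"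
  have c3p: "0 < c3 a" by (rule c3_pos[OF s])
  have dpos: "0 < \<delta>" unfolding \<delta>_def using cp c3p by simp
  have ev: "\<forall>\<^sub>F n in sequentially. 1 \<le> n \<and> 4 / mu a \<le> real n"
  proof -
    have "\<forall>\<^sub>F n in sequentially. nat \<lceil>4 / mu a\<rceil> + 1 \<le> n" by (rule eventually_ge_at_top)
    then show ?thesis
      by eventually_elim (use cp in \<open>auto simp: of_nat_nat intro: order_trans[OF le_of_int_ceiling]\<close>)
  qed
  show ?thesis
  proof (rule exI[of _ \<delta>], intro conjI dpos)
    show "\<forall>\<^sub>F n in sequentially.
           \<exists>E :: nat set. finite E
             \<and> (\<forall>m\<in>E. (1 - 2 * \<mu>) * real n \<le> real m \<and> real m \<le> (1 - \<mu>) * real n)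
             \<and> real (card E) \<ge> \<delta> * real n
             \<and> (\<forall>m\<in>E. norm (acoef (complex_of_real a) m n) \<ge> \<delta> / sqrt (real n))"
      using ev
    proof eventually_elim
      case (elim n)
      then have n: "1 \<le> n" and nbig: "4 / mu a \<le> real n" by auto
      obtain r where r: "\<And>m. acoef (complex_of_real a) m n = complex_of_real (r m)"
        "(\<lambda>m. r m ^ 2) sums 1"
        "(\<lambda>m. real m * r m ^ 2) sums real n"
        "(\<lambda>m. real m ^ 2 * r m ^ 2) sums (real n ^ 2 * (2 / (1 - a ^ 2) - 1))"
        "\<And>m. a * real (m + 2) * r (m + 2) + (1 + a ^ 2) * real (m + 1) * r (m + 1) + a * real m * r m
          = real n * (1 - a ^ 2) * r (m + 1)"
        using real_coeffs[OF s n] by blast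
      obtain E where E: "finite E" "\<forall>m\<in>E. (1 - 2 * mu a) * n \<le> real m \<and> real m \<le> (1 - mu a) * n"
        "mu a / 4 * n \<le> real (card E)" "\<forall>m\<in>E. c3 a / n \<le> r m ^ 2"
        using discrete_main[OF s n nbig r(2,3,4) r(5)] by blast
      have np: "0 < real n" using n by simp
      have "\<delta> * real n \<le> real (card E)"
        using E(3) np by (smt (verit) \<delta>_def min.cobounded1 mult_right_mono)
      moreover have "\<delta> / sqrt (real n) \<le> norm (acoef (complex_of_real a) m n)" if "m \<in> E" for m
      proof -
        have "\<delta> / sqrt (real n) \<le> sqrt (c3 a) / sqrt (real n)"
          unfolding \<delta>_def using np by (intro divide_right_mono) auto
        also have "\<dots> = sqrt (c3 a / n)" by (simp add: real_sqrt_divide)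
        also have "\<dots> \<le> sqrt (r m ^ 2)" using E(4) that by (intro real_sqrt_le_mono) auto
        also have "\<dots> = norm (acoef (complex_of_real a) m n)" unfolding r(1) by simp
        finally show ?thesis .
      qed
      ultimately show ?case using E(1,2) unfolding mu_eq by blast
    qed
  qed
qed


end
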